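(* Let $\epsilon\in(0,1/e]$ and $\eta=\epsilon/\ln(1/\epsilon)$. Let $D$ be a regular distribution with revenue curve $R(q)=q\,v^D(q)$, let $q\in(0,1)$ and $0<\Delta\le q(1-q)\eta$. If $\tilde v$ is any value with $v^D(q+\Delta/2)\le\tilde v\le v^D(q-\Delta/2)$ (in particular, a targeted sample of $D$ from the quantile interval $[q-\Delta/2,q+\Delta/2]$), then the estimate $\tilde R(q)=q\,\tilde v$ satisfies $$\frac{|\tilde R(q)-R(q)|}{R(q)}\le\eta.$$
   Context: Quantile $q^D(v)=\Pr_{x\sim D}[x\ge v]$; value at quantile $v^D(q)=\sup\{v\ge0:q^D(v)\ge q\}$, nonincreasing in $q$. $D$ is regular: it has a density and its revenue curve $R(q)=q\,v^D(q)$ is concave on $(0,1]$ (with $R\ge0$). A targeted sample from $[a,b]$ is $v^D(u)$ with $u$ uniform on $[a,b]$. *)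

theory Defs
  imports "HOL-Probability.Probability"
begin

definition quantile_of :: "real measure \<Rightarrow> real \<Rightarrow> real" where
  "quantile_of D v = measure D {x. v \<le> x}"

definition value_at :: "real measure \<Rightarrow> real \<Rightarrow> real" where
  "value_at D q = Sup {v. 0 \<le> v \<and> q \<le> quantile_of D v}"

definition revenue :: "real measure \<Rightarrow> real \<Rightarrow> real" where
  "revenue D q = q * value_at D q"

definition regular :: "real measure \<Rightarrow> bool" where
  "regular D \<longleftrightarrow> prob_space D \<and>
     (\<exists>f. f \<in> borel_measurable borel \<and> D = density lborel f) \<and>
     concave_on {0<..1} (revenue D) \<and>
     (\<forall>q\<in>{0<..1}. 0 \<le> revenue D q)"

end

theory Submission
  imports Defs
begin

lemma eta_facts:
  fixes \<epsilon> \<eta> :: real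
  assumes "0 < \<epsilon>" and "\<epsilon> \<le> 1 / exp 1" and "\<eta> = \<epsilon> / ln (1 / \<epsilon>)"
  shows "0 < \<eta> \<and> \<eta> \<le> 1"
proof -
  have e0: "1 < exp (1::real)" by simp
  have epsle: "\<epsilon> \<le> 1" using assms(2) e0
    by (smt (verit) divide_le_eq_1_pos exp_gt_zero)
  have e1: "exp 1 \<le> 1 / \<epsilon>" using assms(1,2)
    by (simp add: field_simps)
  have l1: "1 \<le> ln (1/\<epsilon>)" using e1 assms(1)
    by (metis exp_gt_zero exp_le_cancel_iff exp_ln_iff less_le_trans)
  have lp: "0 < ln (1/\<epsilon>)" using l1 by linarith
  have "0 < \<eta>" unfolding assms(3) using divide_pos_pos[OF assms(1) lp] .
  have "\<epsilon> * 1 \<le> \<epsilon> * ln (1/\<epsilon>)" using l1 assms(1) by (intro mult_left_mono) auto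
  hence "\<epsilon> / ln (1/\<epsilon>) \<le> \<epsilon>" using lp by (simp add: divide_le_eq)
  hence "\<eta> \<le> \<epsilon>" using assms(3) by simp
  with \<open>0 < \<eta>\<close> show ?thesis using epsle by simp
qed

lemma core:
  fixes R V :: "real \<Rightarrow> real" and \<eta> q \<Delta> v :: real
  assumes conc: "concave_on {0<..1} R" and nn: "\<forall>x\<in>{0<..1}. 0 \<le> R x"
    and RV: "\<And>x. R x = x * V x"
    and eta0: "0 < \<eta>" and eta1: "\<eta> \<le> 1"
    and "0 < q" and "q < 1"
    and "0 < \<Delta>" and "\<Delta> \<le> q * (1 - q) * \<eta>"
    and "V (q + \<Delta> / 2) \<le> v" and "v \<le> V (q - \<Delta> / 2)"
  shows "\<bar>q * v - R q\<bar> \<le> \<eta> * R q"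
proof -
  define q1 where "q1 = q - \<Delta>/2"
  define q2 where "q2 = q + \<Delta>/2"
  define r where "r = R q"
  define a where "a = V q1"
  define b where "b = V q2"
  have D1: "\<Delta> \<le> q * (1 - q)" using assms(6,7,9) eta1
    by (smt (verit) mult_left_le mult_pos_pos)
  have qq: "q * (1-q) \<le> q" using assms(6,7) by (simp add: algebra_simps)
  have q1pos: "q/2 \<le> q1" using D1 qq by (simp add: q1_def)
  have q1lt: "q1 < q" using assms(8) by (simp add: q1_def)
  have q2gt: "q < q2" using assms(8) by (simp add: q2_def)
  have q2lt: "q2 < 1"
  proof -
    have "q*(1-q) \<le> 1 - q" using assms(6,7) by (simp add: mult_le_cancel_right1)
    hence "\<Delta> \<le> 1-q" using D1 by (rule order_trans[rotated])
    hence "\<Delta> < 2*(1-q)" using assms(7) by simp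
    thus ?thesis by (simp add: q2_def)
  qed
  have r0: "0 \<le> r" using nn assms(6,7) by (simp add: r_def)
  have R1: "0 \<le> R 1" using nn by simp
  have Rq1: "R q1 = q1 * a" by (simp add: RV a_def)
  have Rq2: "R q2 = q2 * b" by (simp add: RV b_def)
  define t where "t = (q - q1) / (1 - q1)"
  have q1b: "0 < q1" "q1 < 1" using q1pos q1lt assms(6,7) by linarith+
  have t01: "0 \<le> t" "t \<le> 1" using q1lt assms(7) q1b by (auto simp: t_def)
  have tt: "t * (1 - q1) = q - q1" using q1b by (simp add: t_def)
  have "(1 - t) * q1 + t * 1 = q1 + t * (1 - q1)" by (simp add: algebra_simps)
  hence tq: "(1 - t) * q1 + t * 1 = q" using tt by simp
  have "(1 - t) * R q1 + t * R 1 \<le> R ((1 - t) *\<^sub>R q1 + t *\<^sub>R 1)"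
    using concave_onD[OF conc t01, of q1 1] q1b by simp
  hence "(1 - t) * R q1 + t * R 1 \<le> r" using tq unfolding r_def by simp
  moreover have "0 \<le> t * R 1" using t01 R1 by simp
  ultimately have c1: "(1 - t) * R q1 \<le> r" by linarith
  have "1 - t = (1-q)/(1-q1)" using q1b by (simp add: t_def field_simps)
  with c1 have U: "(1-q) * (q1 * a) \<le> r * (1 - q1)" using q1b Rq1
    by (simp add: field_simps)
  have "q * (1 - q1) - (1-q)*q1 = \<Delta>/2" by (simp add: q1_def field_simps)
  moreover have "\<Delta>/2 \<le> \<eta> * ((1-q) * q1)"
  proof -
    have "\<eta> * ((1-q) * (q/2)) \<le> \<eta> * ((1-q) * q1)"
      using eta0 assms(7) q1pos by (intro mult_left_mono) auto
    moreover have "\<Delta>/2 \<le> \<eta> * ((1-q) * (q/2))" using assms(9) by (simp add: algebra_simps)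
    ultimately show ?thesis by linarith
  qed
  ultimately have k1: "q * (1 - q1) \<le> (1 + \<eta>) * ((1-q) * q1)" by (simp add: algebra_simps)
  have "(q * a) * ((1-q) * q1) = q * ((1-q) * (q1 * a))" by simp
  also have "\<dots> \<le> q * (r * (1 - q1))" using U assms(6) by simp
  also have "\<dots> = r * (q * (1 - q1))" by simp
  also have "\<dots> \<le> r * ((1 + \<eta>) * ((1-q) * q1))" using k1 r0 by (rule mult_left_mono)
  also have "\<dots> = (r * (1 + \<eta>)) * ((1-q) * q1)" by simp
  finally have "q * a \<le> r * (1 + \<eta>)"
    using q1b assms(7) by (simp add: mult_le_cancel_right_pos)
  moreover have "q * v \<le> q * a" using assms(11) assms(6) unfolding a_def q1_def by simp
  ultimately have up: "q * v - r \<le> \<eta> * r" by (simp add: algebra_simps)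
  define s where "s = (q2 - q) / (1 - q)"
  have s01: "0 \<le> s" "s \<le> 1" using q2gt q2lt assms(7) by (auto simp: s_def)
  have ss: "s * (1 - q) = q2 - q" using assms(7) by (simp add: s_def)
  have "(1 - s) * q + s * 1 = q + s * (1 - q)" by (simp add: algebra_simps)
  hence sq: "(1 - s) * q + s * 1 = q2" using ss by simp
  have "(1 - s) * R q + s * R 1 \<le> R ((1 - s) *\<^sub>R q + s *\<^sub>R 1)"
    using concave_onD[OF conc s01, of q 1] assms(6,7) by simp
  hence "(1 - s) * r + s * R 1 \<le> R q2" using sq unfolding r_def by simp
  moreover have "0 \<le> s * R 1" using s01 R1 by simp
  ultimately have c2: "(1 - s) * r \<le> R q2" by linarith
  have "1 - s = (1-q2)/(1-q)" using assms(7) by (simp add: s_def field_simps)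
  with c2 have L: "r * (1 - q2) \<le> (1-q) * (q2 * b)" using assms(7) Rq2
    by (simp add: field_simps)
  have "(1-q)*q2 - q * (1 - q2) = \<Delta>/2" by (simp add: q2_def field_simps)
  moreover have "\<Delta>/2 \<le> \<eta> * ((1-q) * q2)"
  proof -
    have "\<eta> * ((1-q) * q) \<le> \<eta> * ((1-q) * q2)"
      using eta0 assms(7) q2gt by (intro mult_left_mono) auto
    moreover have "\<Delta>/2 \<le> \<eta> * ((1-q) * q)" using assms(9) assms(8) by (simp add: algebra_simps)
    ultimately show ?thesis by linarith
  qed
  ultimately have k2: "(1 - \<eta>) * ((1-q) * q2) \<le> q * (1 - q2)" by (simp add: algebra_simps)
  have "(r * (1 - \<eta>)) * ((1-q) * q2) = r * ((1 - \<eta>) * ((1-q) * q2))" by simp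
  also have "\<dots> \<le> r * (q * (1 - q2))" using k2 r0 by (rule mult_left_mono)
  also have "\<dots> = q * (r * (1 - q2))" by simp
  also have "\<dots> \<le> q * ((1-q) * (q2 * b))" using L assms(6) by simp
  also have "\<dots> = (q * b) * ((1-q) * q2)" by simp
  finally have "r * (1 - \<eta>) \<le> q * b"
    using q2gt assms(6,7) by (simp add: mult_le_cancel_right_pos)
  moreover have "q * b \<le> q * v" using assms(10) assms(6) unfolding b_def q2_def by simp
  ultimately have lo: "r - q * v \<le> \<eta> * r" by (simp add: algebra_simps)
  show ?thesis using up lo unfolding r_def by linarith
qed

theorem mainTheorem12:
  fixes D :: "real measure" and \<epsilon> \<eta> q \<Delta> v :: real
  assumes "0 < \<epsilon>" and "\<epsilon> \<le> 1 / exp 1"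
    and "\<eta> = \<epsilon> / ln (1 / \<epsilon>)"
    and "regular D"
    and "AE x in D. 0 \<le> x"
    and "0 < q" and "q < 1"
    and "0 < \<Delta>" and "\<Delta> \<le> q * (1 - q) * \<eta>"
    and "value_at D (q + \<Delta> / 2) \<le> v" and "v \<le> value_at D (q - \<Delta> / 2)"
  shows "\<bar>q * v - revenue D q\<bar> / revenue D q \<le> \<eta>"
proof -
  have e: "0 < \<eta>" "\<eta> \<le> 1" using eta_facts[OF assms(1,2,3)] by auto
  have conc: "concave_on {0<..1} (revenue D)" and nn: "\<forall>x\<in>{0<..1}. 0 \<le> revenue D x"
    using assms(4) by (auto simp: regular_def)
  have k: "\<bar>q * v - revenue D q\<bar> \<le> \<eta> * revenue D q"
    by (rule core[OF conc nn _ e assms(6-11)]) (simp add: revenue_def)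
  show ?thesis
  proof (cases "revenue D q = 0")
    case True thus ?thesis using e by simp
  next
    case False
    hence "0 < revenue D q" using nn assms(6,7) by (metis greaterThanAtMost_iff less_eq_real_def less_imp_le)
    thus ?thesis using k by (simp add: divide_le_eq)
  qed
qed

end
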